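(* Let $\gamma>0$ and $S=(S_1,\ldots,S_n)$ be nonnegative nonzero symmetric $p\times p$ matrices. Then for all $\Delta,\Delta'\in\mathcal D_n^+$, $$d_s\big(\Lambda^S(\Delta),\Lambda^S(\Delta')\big)\le\max\big(\phi^S_\gamma(\Delta),\phi^S_\gamma(\Delta')\big)\,d_s(\Delta,\Delta'),$$ and in particular $\Lambda^S:\mathcal D_n^+\to\mathcal D_n^+$ is stable.
   Context: $\mathcal D_n^+$: $n\times n$ diagonal matrices with positive diagonal entries; $d_s(\Delta,\Delta')=\max_i\frac{|\Delta_i-\Delta'_i|}{\sqrt{\Delta_i\Delta'_i}}$; a map is stable if it is $1$-Lipschitz for $d_s$. $Q_\gamma(S,\Delta)=\big(\frac1n\sum_i\Delta_iS_i+\gamma I_p\big)^{-1}$, $\phi^S_\gamma(\Delta)=\|I_p-\gamma Q_\gamma(S,\Delta)\|$ (spectral norm). $\Lambda^S(\Delta)\in\mathcal D_n^+$ is the unique solution of $\Lambda^S(\Delta)_i=\frac1n\operatorname{tr}\Big(S_i\big(\frac1n\sum_{j=1}^n\frac{\Delta_jS_j}{1+\Delta_j\Lambda^S(\Delta)_j}+\gamma I_p\big)^{-1}\Big)$, $i\in[n]$. *)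

theory Defs
  imports "HOL-Analysis.Analysis"
begin

text \<open>Elements of D_n^+ are represented by their diagonal, a vector in real^'n
  with positive entries; n = CARD('n), p = CARD('p).\<close>

definition pos_diag :: "real^'n \<Rightarrow> bool" where
  "pos_diag \<Delta> \<longleftrightarrow> (\<forall>i. 0 < \<Delta>$i)"

definition d_s :: "real^'n::finite \<Rightarrow> real^'n \<Rightarrow> real" where
  "d_s \<Delta> \<Delta>' = Max (range (\<lambda>i. \<bar>\<Delta>$i - \<Delta>'$i\<bar> / sqrt (\<Delta>$i * \<Delta>'$i)))"

definition stable :: "(real^'n::finite \<Rightarrow> real^'n) \<Rightarrow> bool" where
  "stable f \<longleftrightarrow> (\<forall>\<Delta> \<Delta>'. pos_diag \<Delta> \<longrightarrow> pos_diag \<Delta>' \<longrightarrow>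
      d_s (f \<Delta>) (f \<Delta>') \<le> d_s \<Delta> \<Delta>')"

definition nonneg_sym :: "real^'p^'p \<Rightarrow> bool" where
  "nonneg_sym A \<longleftrightarrow> transpose A = A \<and> (\<forall>x. 0 \<le> x \<bullet> (A *v x))"

definition Qmat :: "real \<Rightarrow> ('n::finite \<Rightarrow> real^'p^'p) \<Rightarrow> real^'n \<Rightarrow> real^'p^'p" where
  "Qmat \<gamma> S \<Delta> = matrix_inv ((1 / real CARD('n)) *\<^sub>R (\<Sum>i\<in>UNIV. (\<Delta>$i) *\<^sub>R S i)
       + \<gamma> *\<^sub>R mat 1)"

definition phi :: "real \<Rightarrow> ('n::finite \<Rightarrow> real^'p^'p) \<Rightarrow> real^'n \<Rightarrow> real" where
  "phi \<gamma> S \<Delta> = onorm (\<lambda>x. (mat 1 - \<gamma> *\<^sub>R Qmat \<gamma> S \<Delta>) *v x)"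

definition Lambda_eq :: "real \<Rightarrow> ('n::finite \<Rightarrow> real^'p^'p) \<Rightarrow> real^'n \<Rightarrow> real^'n \<Rightarrow> bool" where
  "Lambda_eq \<gamma> S \<Delta> L \<longleftrightarrow> pos_diag L \<and>
     (\<forall>i. L$i = (1 / real CARD('n)) * trace (S i ** matrix_inv
        ((1 / real CARD('n)) *\<^sub>R (\<Sum>j\<in>UNIV. (\<Delta>$j / (1 + \<Delta>$j * L$j)) *\<^sub>R S j)
          + \<gamma> *\<^sub>R mat 1)))"

definition LambdaS :: "real \<Rightarrow> ('n::finite \<Rightarrow> real^'p^'p) \<Rightarrow> real^'n \<Rightarrow> real^'n" where
  "LambdaS \<gamma> S \<Delta> = (THE L. Lambda_eq \<gamma> S \<Delta> L)"

end

theory Submission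
  imports Defs
begin

lemma inv_of_inj:
  fixes B :: "real^'p::finite^'p"
  assumes "inj ((*v) B)"
  shows "matrix_inv B ** B = mat 1 \<and> B ** matrix_inv B = mat 1"
proof -
  obtain B' where "B' ** B = mat 1" using assms matrix_left_invertible_injective by blast
  then have "B ** B' = mat 1 \<and> B' ** B = mat 1" using matrix_left_right_inverse by blast
  then have "B ** matrix_inv B = mat 1 \<and> matrix_inv B ** B = mat 1"
    unfolding matrix_inv_def by (rule someI)
  then show ?thesis by blast
qed

lemma sym_inner: 
  fixes M :: "real^'p::finite^'p"
  assumes "transpose M = M"
  shows "x \<bullet> (M *v y) = (M *v x) \<bullet> y"
  by (metis assms dot_lmul_matrix inner_commute transpose_matrix_vector)

lemma quad_axis: 
  fixes M :: "real^'p::finite^'p"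
  assumes "transpose M = M"
  shows "(x + t *\<^sub>R axis k 1) \<bullet> (M *v (x + t *\<^sub>R axis k 1))
   = x \<bullet> (M *v x) + 2 * t * (column k M \<bullet> x) + t*t* M$k$k"
proof -
  have c: "M *v axis k 1 = column k M" by (simp add: matrix_vector_mult_basis)
  have "axis k 1 \<bullet> (M *v x) = (M *v axis k 1) \<bullet> x" by (rule sym_inner[OF assms])
  then have e: "axis k 1 \<bullet> (M *v x) = column k M \<bullet> x" using c by simp
  have f: "axis k 1 \<bullet> column k M = M$k$k" by (simp add: inner_axis' column_def)
  show ?thesis
    by (simp add: matrix_vector_right_distrib inner_add_left inner_add_right
        matrix_vector_mult_scaleR c e f inner_commute[of x "column k M"] algebra_simps)
qed

lemma discr:
  fixes q b d :: real
  assumes "\<And>t. 0 \<le> q + 2*t*b + t*t*d" "0 \<le> d"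
  shows "b*b \<le> d*q"
proof (cases "d = 0")
  case True
  show ?thesis
  proof (cases "b = 0")
    case False
    have "0 \<le> q + 2*(-(q+1)/(2*b))*b + (-(q+1)/(2*b))*(-(q+1)/(2*b))*d" by (rule assms(1))
    with True False show ?thesis by (simp add: field_simps)
  qed (simp add: True)
next
  case False
  then have d: "d > 0" using assms(2) by simp
  have "0 \<le> q + 2*(-b/d)*b + (-b/d)*(-b/d)*d" by (rule assms(1))
  also have "\<dots> = (d*q - b*b)/d" using d by (simp add: field_simps)
  finally show ?thesis using d by (simp add: divide_nonneg_pos zero_le_divide_iff)
qed

lemma psd_discr:
  fixes M :: "real^'p::finite^'p"
  assumes "transpose M = M" "\<forall>x. 0 \<le> x \<bullet> (M *v x)"
  shows "(column k M \<bullet> x) * (column k M \<bullet> x) \<le> M$k$k * (x \<bullet> (M *v x))"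
proof (rule discr)
  fix t
  show "0 \<le> x \<bullet> (M *v x) + 2 * t * (column k M \<bullet> x) + t * t * M $ k $ k"
    using assms(2) quad_axis[OF assms(1), of x t k] by metis
next
  show "0 \<le> M$k$k" using assms(2)[rule_format, of "axis k 1"]
    by (simp add: matrix_vector_mult_basis inner_axis' column_def)
qed

lemma psd_decomp_aux:
  fixes M :: "real^'p::finite^'p"
  assumes "finite F"
  shows "transpose M = M \<Longrightarrow> (\<forall>x. 0 \<le> x \<bullet> (M *v x)) \<Longrightarrow> (\<forall>i j. i \<notin> F \<longrightarrow> M$i$j = 0)
     \<Longrightarrow> \<exists>u. \<forall>i j. M$i$j = (\<Sum>k\<in>F. u k $ i * u k $ j)"
  using assms
proof (induction F arbitrary: M rule: finite_induct)
  case empty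
  then show ?case by simp
next
  case (insert k F)
  have symm: "M$i$j = M$j$i" for i j using insert.prems(1)
    by (metis transpose_def vec_lambda_beta)
  have dk: "0 \<le> M$k$k" using insert.prems(2)[rule_format, of "axis k 1"]
    by (simp add: matrix_vector_mult_basis inner_axis' column_def)
  show ?case
  proof (cases "M$k$k = 0")
    case True
    have "M$k$j = 0" for j
    proof -
      have "(column k M \<bullet> axis j 1) * (column k M \<bullet> axis j 1) \<le> 0"
        using psd_discr[OF insert.prems(1,2), of k "axis j 1"] True by simp
      then have "column k M \<bullet> axis j 1 = 0" by (smt (verit) mult_le_0_iff)
      then show ?thesis by (simp add: inner_axis column_def symm[of j k])
    qed
    then have "\<forall>i j. i \<notin> F \<longrightarrow> M$i$j = 0" using insert.prems(3) by (metis insertE)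
    then obtain u where u: "\<forall>i j. M$i$j = (\<Sum>k\<in>F. u k $ i * u k $ j)"
      using insert.IH[OF insert.prems(1,2)] by blast
    show ?thesis
      apply (rule exI[of _ "u(k := 0)"])
      using u insert.hyps by (simp add: sum.insert, (intro allI sum.cong; auto))
  next
    case False
    then have dpos: "M$k$k > 0" using dk by simp
    define a where "a = column k M"
    define M' where "M' = M - (\<chi> i j. a$i * a$j / M$k$k)"
    have M'e: "M'$i$j = M$i$j - a$i * a$j / M$k$k" for i j by (simp add: M'_def)
    have s': "transpose M' = M'"
      by (simp add: vec_eq_iff transpose_def M'e symm mult.commute)
    have q': "x \<bullet> (M' *v x) = x \<bullet> (M *v x) - (a \<bullet> x) * (a \<bullet> x) / M$k$k" for x
    proof -
      have "x \<bullet> (M' *v x) = (\<Sum>i\<in>UNIV. x$i * (\<Sum>j\<in>UNIV. M'$i$j * x$j))"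
        by (simp add: inner_vec_def matrix_vector_mult_def)
      also have "\<dots> = (\<Sum>i\<in>UNIV. x$i * (\<Sum>j\<in>UNIV. M$i$j * x$j)) - (\<Sum>i\<in>UNIV. a$i * x$i) * (\<Sum>j\<in>UNIV. a$j * x$j) / M$k$k"
        by (simp add: M'e algebra_simps sum_subtractf sum_distrib_left sum_distrib_right sum_divide_distrib)
      finally show ?thesis by (simp add: inner_vec_def matrix_vector_mult_def mult.commute)
    qed
    have p': "\<forall>x. 0 \<le> x \<bullet> (M' *v x)"
    proof
      fix x
      have "(a \<bullet> x) * (a \<bullet> x) \<le> M$k$k * (x \<bullet> (M *v x))"
        unfolding a_def by (rule psd_discr[OF insert.prems(1,2)])
      then have "(a \<bullet> x) * (a \<bullet> x) / M$k$k \<le> x \<bullet> (M *v x)"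
        using dpos by (simp add: divide_le_eq mult.commute)
      then show "0 \<le> x \<bullet> (M' *v x)" by (simp add: q')
    qed
    have z': "\<forall>i j. i \<notin> F \<longrightarrow> M'$i$j = 0"
    proof (intro allI impI)
      fix i j assume "i \<notin> F"
      show "M'$i$j = 0"
      proof (cases "i = k")
        case True
        then show ?thesis using dpos by (simp add: M'e a_def column_def symm[of j k])
      next
        case False
        then have "M$i$j = 0" "a$i = 0" using insert.prems(3) \<open>i \<notin> F\<close>
          by (auto simp: a_def column_def)
        then show ?thesis by (simp add: M'e)
      qed
    qed
    obtain u where u: "\<forall>i j. M'$i$j = (\<Sum>k\<in>F. u k $ i * u k $ j)"
      using insert.IH[OF s' p' z'] by blast
    define v where "v = (1 / sqrt (M$k$k)) *\<^sub>R a"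
    have vv: "v$i * v$j = a$i * a$j / M$k$k" for i j
      using dpos by (simp add: v_def field_simps real_sqrt_mult[symmetric])
    show ?thesis
    proof (rule exI[of _ "u(k := v)"], intro allI)
      fix i j
      have "(\<Sum>l\<in>F. (u(k := v)) l $ i * (u(k := v)) l $ j) = (\<Sum>l\<in>F. u l $ i * u l $ j)"
        using insert.hyps by (intro sum.cong) auto
      then show "M $ i $ j = (\<Sum>l\<in>insert k F. (u(k := v)) l $ i * (u(k := v)) l $ j)"
        using insert.hyps u vv M'e by (simp add: sum.insert) (metis diff_add_cancel add.commute)
    qed
  qed
qed

lemma psd_decomp:
  fixes M :: "real^'p::finite^'p"
  assumes "nonneg_sym M"
  shows "\<exists>u. \<forall>i j. M$i$j = (\<Sum>(k::'p)\<in>UNIV. u k $ i * u k $ j)"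
  using psd_decomp_aux[of UNIV M] assms unfolding nonneg_sym_def by simp

definition Am :: "('n::finite \<Rightarrow> real^'p::finite^'p) \<Rightarrow> real^'n \<Rightarrow> real^'p^'p" where
  "Am S D = (1 / real CARD('n)) *\<^sub>R (\<Sum>i\<in>UNIV. (D$i) *\<^sub>R S i)"

definition Bm :: "real \<Rightarrow> ('n::finite \<Rightarrow> real^'p::finite^'p) \<Rightarrow> real^'n \<Rightarrow> real^'p^'p" where
  "Bm g S D = Am S D + g *\<^sub>R mat 1"

lemma Qmat_eq: "Qmat g S D = matrix_inv (Bm g S D)"
  by (simp add: Qmat_def Bm_def Am_def)

lemma sum_mv: "(\<Sum>i\<in>A. f i) *v (y::real^'p::finite) = (\<Sum>i\<in>A. f i *v y)"
  for f :: "'a \<Rightarrow> real^'p^'q::finite"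
proof (induction A rule: infinite_finite_induct)
  case (infinite A) then show ?case by simp
next
  case empty then show ?case by simp
next
  case (insert x F) then show ?case by (simp add: matrix_vector_mult_add_rdistrib)
qed

lemma Am_mv: "Am S D *v y = (1 / real CARD('n)) *\<^sub>R (\<Sum>i\<in>UNIV. (D$i) *\<^sub>R (S i *v y))"
  for S :: "'n::finite \<Rightarrow> real^'p::finite^'p"
  by (simp add: Am_def sum_mv scaleR_matrix_vector_assoc[symmetric])

lemma Bm_mv: "Bm g S D *v y = Am S D *v y + g *\<^sub>R y"
  by (simp add: Bm_def matrix_vector_mult_add_rdistrib scaleR_matrix_vector_assoc[symmetric])

locale sett =
  fixes g :: real and S :: "'n::finite \<Rightarrow> real^'p::finite^'p"
  assumes gpos: "g > 0" and Sns: "\<And>i. nonneg_sym (S i)" and Snz: "\<And>i. S i \<noteq> 0"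
begin

lemma S_sym: "x \<bullet> (S i *v y) = (S i *v x) \<bullet> y"
  using Sns[of i] unfolding nonneg_sym_def by (intro sym_inner) simp

lemma S_psd: "0 \<le> x \<bullet> (S i *v x)"
  using Sns[of i] unfolding nonneg_sym_def by simp

lemma Am_sym: "x \<bullet> (Am S D *v y) = (Am S D *v x) \<bullet> y"
  proof -
  have "x \<bullet> (Am S D *v y) = (1 / real CARD('n)) * (\<Sum>i\<in>UNIV. D$i * (x \<bullet> (S i *v y)))"
    by (simp add: Am_mv inner_sum_right)
  also have "\<dots> = (1 / real CARD('n)) * (\<Sum>i\<in>UNIV. D$i * ((S i *v x) \<bullet> y))"
    by (simp only: S_sym)
  also have "\<dots> = (Am S D *v x) \<bullet> y"
    by (simp add: Am_mv inner_sum_left)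
  finally show ?thesis .
qed

lemma Am_quad: "x \<bullet> (Am S D *v x) = (1/real CARD('n)) * (\<Sum>i\<in>UNIV. D$i * (x \<bullet> (S i *v x)))"
  by (simp add: Am_mv inner_sum_right)

lemma Am_psd: "(\<forall>i. 0 \<le> D$i) \<Longrightarrow> 0 \<le> x \<bullet> (Am S D *v x)"
  unfolding Am_quad by (intro mult_nonneg_nonneg sum_nonneg) (auto simp: S_psd)

lemma Am_mono: "(\<forall>i. D$i \<le> D'$i) \<Longrightarrow> x \<bullet> (Am S D *v x) \<le> x \<bullet> (Am S D' *v x)"
  unfolding Am_quad by (intro mult_left_mono sum_mono mult_right_mono) (auto simp: S_psd)

lemma Bm_sym: "x \<bullet> (Bm g S D *v y) = (Bm g S D *v x) \<bullet> y"
  proof -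
  have "x \<bullet> (Bm g S D *v y) = x \<bullet> (Am S D *v y) + g * (x \<bullet> y)"
    by (simp add: Bm_mv inner_add_right)
  also have "\<dots> = (Am S D *v x) \<bullet> y + g * (x \<bullet> y)" by (simp only: Am_sym)
  also have "\<dots> = (Bm g S D *v x) \<bullet> y" by (simp add: Bm_mv inner_add_left)
  finally show ?thesis .
qed

lemma Bm_quad: "x \<bullet> (Bm g S D *v x) = x \<bullet> (Am S D *v x) + g * (x \<bullet> x)"
  by (simp add: Bm_mv inner_add_right)

lemma Bm_inj: assumes "\<forall>i. 0 \<le> D$i" shows "inj ((*v) (Bm g S D))"
proof (rule injI)
  fix x y assume "Bm g S D *v x = Bm g S D *v y"
  then have "Bm g S D *v (x - y) = 0" by (simp add: matrix_vector_mult_diff_distrib)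
  then have "(x-y) \<bullet> (Bm g S D *v (x - y)) = 0" by simp
  then have "g * ((x-y) \<bullet> (x-y)) \<le> 0" using Am_psd[OF assms, of "x-y"] by (simp add: Bm_quad)
  then have "(x-y) \<bullet> (x-y) \<le> 0" using gpos by (simp add: mult_le_0_iff)
  then show "x = y" by (metis inner_eq_zero_iff inner_ge_zero order_antisym right_minus_eq)
qed

abbreviation "Q D \<equiv> Qmat g S D"

lemma BQ: assumes "\<forall>i. 0 \<le> D$i"
  shows "Bm g S D *v (Q D *v v) = v" "Q D *v (Bm g S D *v v) = v"
  using inv_of_inj[OF Bm_inj[OF assms]]
  by (simp_all add: Qmat_eq matrix_vector_mul_assoc)

lemma Q_sym: assumes "\<forall>i. 0 \<le> D$i" shows "x \<bullet> (Q D *v y) = (Q D *v x) \<bullet> y"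
proof -
  have "x \<bullet> (Q D *v y) = (Bm g S D *v (Q D *v x)) \<bullet> (Q D *v y)" using BQ[OF assms] by simp
  also have "\<dots> = (Q D *v x) \<bullet> (Bm g S D *v (Q D *v y))" using Bm_sym by simp
  also have "\<dots> = (Q D *v x) \<bullet> y" using BQ[OF assms] by simp
  finally show ?thesis .
qed

end

lemma sum3_swap: "(\<Sum>a\<in>A. \<Sum>b\<in>B. \<Sum>k\<in>C. f a b k) = (\<Sum>k\<in>C. \<Sum>b\<in>B. \<Sum>a\<in>A. f a b k)"
proof -
  have "(\<Sum>a\<in>A. \<Sum>b\<in>B. \<Sum>k\<in>C. f a b k) = (\<Sum>a\<in>A. \<Sum>k\<in>C. \<Sum>b\<in>B. f a b k)"
    by (intro sum.cong refl sum.swap)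
  also have "\<dots> = (\<Sum>k\<in>C. \<Sum>a\<in>A. \<Sum>b\<in>B. f a b k)" by (rule sum.swap)
  also have "\<dots> = (\<Sum>k\<in>C. \<Sum>b\<in>B. \<Sum>a\<in>A. f a b k)" by (intro sum.cong refl sum.swap)
  finally show ?thesis .
qed

context sett begin

definition U :: "'n \<Rightarrow> 'p \<Rightarrow> real^'p" where "U = (SOME U. \<forall>i a b. S i$a$b = (\<Sum>k\<in>UNIV. U i k$a * U i k$b))"

lemma U_spec: "S i$a$b = (\<Sum>k\<in>UNIV. U i k$a * U i k$b)"
proof -
  have "\<forall>i. \<exists>u. \<forall>a b. S i$a$b = (\<Sum>(k::'p)\<in>UNIV. u k $ a * u k $ b)"
    using psd_decomp Sns by blast
  then have "\<exists>U. \<forall>i a b. S i$a$b = (\<Sum>(k::'p)\<in>UNIV. U i k$a * U i k$b)"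
    by metis
  then have "\<forall>i a b. S i$a$b = (\<Sum>k\<in>UNIV. U i k$a * U i k$b)"
    unfolding U_def by (rule someI_ex)
  then show ?thesis by blast
qed

lemma trace_U: "trace (S i ** M) = (\<Sum>k\<in>UNIV. U i k \<bullet> (M *v U i k))"
proof -
  have "trace (S i ** M) = (\<Sum>a\<in>UNIV. \<Sum>b\<in>UNIV. S i$a$b * M$b$a)"
    by (simp add: trace_def matrix_matrix_mult_def)
  also have "\<dots> = (\<Sum>a\<in>UNIV. \<Sum>b\<in>UNIV. \<Sum>k\<in>UNIV. U i k$a * U i k$b * M$b$a)"
    by (simp add: U_spec sum_distrib_right)
  also have "\<dots> = (\<Sum>k\<in>UNIV. \<Sum>b\<in>UNIV. \<Sum>a\<in>UNIV. U i k$b * (M$b$a * U i k$a))"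
    by (subst sum3_swap) (simp add: algebra_simps)
  also have "\<dots> = (\<Sum>k\<in>UNIV. U i k \<bullet> (M *v U i k))"
    by (simp add: inner_vec_def matrix_vector_mult_def sum_distrib_left)
  finally show ?thesis .
qed

lemma S_U: "(S j *v w) \<bullet> z = (\<Sum>l\<in>UNIV. (U j l \<bullet> w) * (U j l \<bullet> z))"
proof -
  have "(S j *v w) \<bullet> z = (\<Sum>a\<in>UNIV. (\<Sum>b\<in>UNIV. S j$a$b * w$b) * z$a)"
    by (simp add: inner_vec_def matrix_vector_mult_def)
  also have "\<dots> = (\<Sum>a\<in>UNIV. \<Sum>b\<in>UNIV. \<Sum>l\<in>UNIV. U j l$a * U j l$b * w$b * z$a)"
    by (simp add: U_spec sum_distrib_right)
  also have "\<dots> = (\<Sum>l\<in>UNIV. (\<Sum>b\<in>UNIV. U j l$b * w$b) * (\<Sum>a\<in>UNIV. U j l$a * z$a))"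
    apply (subst sum3_swap)
    apply (simp add: sum_distrib_left sum_distrib_right)
    apply (rule sum.cong[OF refl])
    apply (subst sum.swap)
    apply (simp add: algebra_simps)
    done
  also have "\<dots> = (\<Sum>l\<in>UNIV. (U j l \<bullet> w) * (U j l \<bullet> z))"
    by (simp add: inner_vec_def)
  finally show ?thesis .
qed

lemma Snz_U: "\<exists>k. U i k \<noteq> 0"
proof (rule ccontr)
  assume "\<not> ?thesis"
  then have "S i = 0" by (simp add: vec_eq_iff U_spec)
  then show False using Snz by blast
qed

lemma Qdiff:
  assumes "\<forall>i. 0 \<le> D$i" "\<forall>i. 0 \<le> D'$i"
  shows "Q D *v v - Q D' *v v = Q D *v (Am S D' *v (Q D' *v v) - Am S D *v (Q D' *v v))"
proof -
  define w where "w = Q D' *v v"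
  have v: "v = Bm g S D' *v w" using BQ[OF assms(2)] by (simp add: w_def)
  have "Q D *v v - Q D' *v v = Q D *v (Bm g S D' *v w) - Q D *v (Bm g S D *v w)"
    using BQ[OF assms(1)] v w_def by simp
  also have "\<dots> = Q D *v (Bm g S D' *v w - Bm g S D *v w)"
    by (simp add: matrix_vector_mult_diff_distrib)
  also have "\<dots> = Q D *v (Am S D' *v w - Am S D *v w)"
    by (simp add: Bm_mv)
  finally show ?thesis by (simp add: w_def)
qed

lemma quad_diff:
  assumes "\<forall>i. 0 \<le> D$i" "\<forall>i. 0 \<le> D'$i"
  shows "u \<bullet> (Q D *v u) - u \<bullet> (Q D' *v u) =
     (1 / real CARD('n)) * (\<Sum>j\<in>UNIV. (D'$j - D$j) * (\<Sum>l\<in>UNIV. (U j l \<bullet> (Q D *v u)) * (U j l \<bullet> (Q D' *v u))))"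
proof -
  have "u \<bullet> (Q D *v u) - u \<bullet> (Q D' *v u) = u \<bullet> (Q D *v u - Q D' *v u)"
    by (simp add: inner_diff_right)
  also have "\<dots> = (Q D *v u) \<bullet> (Am S D' *v (Q D' *v u) - Am S D *v (Q D' *v u))"
    using Qdiff[OF assms] Q_sym[OF assms(1)] by simp
  also have "\<dots> = (1 / real CARD('n)) * (\<Sum>j\<in>UNIV. (D'$j - D$j) * ((S j *v (Q D' *v u)) \<bullet> (Q D *v u)))"
  proof -
    have e: "(Q D *v u) \<bullet> (Am S E *v (Q D' *v u)) = (1 / real CARD('n)) * (\<Sum>j\<in>UNIV. E$j * ((S j *v (Q D' *v u)) \<bullet> (Q D *v u)))" for E
      by (simp add: Am_mv inner_sum_right inner_commute)
    show ?thesis by (simp only: inner_diff_right e right_diff_distrib[symmetric] sum_subtractf[symmetric] left_diff_distrib)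
  qed
  also have "\<dots> = (1 / real CARD('n)) * (\<Sum>j\<in>UNIV. (D'$j - D$j) * (\<Sum>l\<in>UNIV. (U j l \<bullet> (Q D *v u)) * (U j l \<bullet> (Q D' *v u))))"
    by (simp add: S_U mult.commute)
  finally show ?thesis .
qed

end

lemma ii: "x \<bullet> x = norm x * norm x"
  by (metis power2_eq_square power2_norm_eq_inner)

context sett begin

lemma f_B:
  assumes "\<forall>i. 0 \<le> D$i"
  shows "(mat 1 - g *\<^sub>R Q D) *v (Bm g S D *v y) = Am S D *v y"
proof -
  have "(mat 1 - g *\<^sub>R Q D) *v (Bm g S D *v y) = Bm g S D *v y - g *\<^sub>R (Q D *v (Bm g S D *v y))"
    by (simp add: matrix_vector_mult_diff_rdistrib scaleR_matrix_vector_assoc[symmetric])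
  also have "\<dots> = Am S D *v y" using BQ[OF assms] by (simp add: Bm_mv)
  finally show ?thesis .
qed

lemma phi_nonneg: "0 \<le> phi g S D"
  unfolding phi_def by (rule onorm_pos_le) simp

lemma phi_bound:
  assumes "\<forall>i. 0 \<le> D$i" "\<forall>i. D$i \<le> E$i"
  shows "y \<bullet> (Am S D *v y) \<le> phi g S E * (y \<bullet> (Am S D *v y) + g * (y \<bullet> y))"
proof -
  define c where "c = phi g S E"
  have E0: "\<forall>i. 0 \<le> E$i" using assms by (meson order_trans)
  define t where "t = norm (Am S E *v y)"
  define s where "s = norm y"
  define m where "m = y \<bullet> (Am S E *v y)"
  define mD where "mD = y \<bullet> (Am S D *v y)"
  have c0: "0 \<le> c" unfolding c_def by (rule phi_nonneg)
  have "norm ((mat 1 - g *\<^sub>R Q E) *v (Bm g S E *v y)) \<le> c * norm (Bm g S E *v y)"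
    unfolding c_def phi_def by (rule onorm) simp
  then have "t \<le> c * norm (Am S E *v y + g *\<^sub>R y)" using f_B[OF E0] by (simp add: t_def Bm_mv)
  also have "\<dots> \<le> c * (t + g * s)"
    using norm_triangle_ineq[of "Am S E *v y" "g *\<^sub>R y"] c0 gpos
    by (intro mult_left_mono) (auto simp: t_def s_def)
  finally have ts: "(1 - c) * t \<le> c * g * s" by (simp add: algebra_simps)
  have mts: "m \<le> s * t" unfolding m_def s_def t_def by (rule norm_cauchy_schwarz)
  have mD0: "0 \<le> mD" unfolding mD_def using Am_psd[OF assms(1)] .
  have mDm: "mD \<le> m" unfolding mD_def m_def using Am_mono assms(2) by blast
  have ss: "y \<bullet> y = s * s" by (simp add: s_def ii)
  show ?thesis
  proof (cases "c \<le> 1")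
    case True
    have "(1 - c) * mD \<le> (1 - c) * m" using True mDm by (intro mult_left_mono) auto
    also have "\<dots> \<le> (1 - c) * (s * t)" using True mts by (intro mult_left_mono) auto
    also have "\<dots> = s * ((1 - c) * t)" by simp
    also have "\<dots> \<le> s * (c * g * s)" using ts by (intro mult_left_mono) (auto simp: s_def)
    finally have "(1 - c) * mD \<le> c * g * (s * s)" by (simp add: algebra_simps)
    then show ?thesis unfolding c_def[symmetric] mD_def[symmetric] ss by (simp add: algebra_simps)
  next
    case False
    have "mD \<le> c * mD" using False mD0 by (simp add: mult_le_cancel_right1)
    moreover have "0 \<le> c * (g * (s * s))" using c0 gpos by simp
    ultimately show ?thesis unfolding c_def[symmetric] mD_def[symmetric] ss by (simp add: algebra_simps)
  qed
qed

lemma phi_lt1: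
  assumes "\<forall>i. 0 \<le> D$i"
  shows "phi g S D < 1"
proof -
  define M where "M = onorm ((*v) (Am S D))"
  have M0: "0 \<le> M" unfolding M_def by (rule onorm_pos_le) simp
  define c0 where "c0 = M / sqrt (M^2 + g^2)"
  have den: "0 < M^2 + g^2" using gpos by (simp add: add_nonneg_pos)
  have c0_0: "0 \<le> c0" using M0 by (simp add: c0_def)
  have c0sq: "c0^2 = M^2 / (M^2 + g^2)" using den by (simp add: c0_def power_divide)
  have c0_1: "c0 < 1"
  proof -
    have "M^2 < M^2 + g^2" using gpos by simp
    then have "M < sqrt (M^2 + g^2)" by (rule real_less_rsqrt)
    then show ?thesis using den by (simp add: c0_def)
  qed
  have "onorm (\<lambda>x. (mat 1 - g *\<^sub>R Q D) *v x) \<le> c0"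
  proof (rule onorm_le)
    fix v :: "real^'p"
    define y where "y = Q D *v v"
    have v: "v = Bm g S D *v y" using BQ[OF assms] by (simp add: y_def)
    define t where "t = norm (Am S D *v y)"
    define s where "s = norm y"
    have fv: "(mat 1 - g *\<^sub>R Q D) *v v = Am S D *v y" using f_B[OF assms] v by simp
    have t0: "0 \<le> t" by (simp add: t_def)
    have tM: "t \<le> M * s" unfolding t_def s_def M_def by (rule onorm) simp
    have t2: "t^2 \<le> M^2 * s^2"
      using power_mono[OF tM t0] by (metis power_mult_distrib)
    have psd: "0 \<le> (Am S D *v y) \<bullet> y" using Am_psd[OF assms, of y] by (simp add: inner_commute)
    have "(norm v)^2 = (Am S D *v y + g *\<^sub>R y) \<bullet> (Am S D *v y + g *\<^sub>R y)"
      using v Bm_mv power2_norm_eq_inner by metis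
    also have "\<dots> = (Am S D *v y) \<bullet> (Am S D *v y) + 2 * g * ((Am S D *v y) \<bullet> y) + g^2 * (y \<bullet> y)"
      by (simp add: inner_add_left inner_add_right inner_commute[of y "Am S D *v y"] power2_eq_square algebra_simps)
    also have "\<dots> = t^2 + 2 * g * ((Am S D *v y) \<bullet> y) + g^2 * s^2"
      by (simp only: t_def s_def power2_norm_eq_inner)
    finally have nv0: "(norm v)^2 = t^2 + 2 * g * ((Am S D *v y) \<bullet> y) + g^2 * s^2" .
    have "0 \<le> 2 * g * ((Am S D *v y) \<bullet> y)" using psd gpos by simp
    then have nv: "t^2 + g^2 * s^2 \<le> (norm v)^2" using nv0 by linarith
    have a1: "t^2 * g^2 \<le> M^2 * s^2 * g^2" using t2 by (rule mult_right_mono) simp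
    have "t^2 * (M^2 + g^2) = M^2 * t^2 + t^2 * g^2" by (simp add: algebra_simps)
    also have "\<dots> \<le> M^2 * t^2 + M^2 * s^2 * g^2" using a1 by linarith
    also have "\<dots> = M^2 * (t^2 + g^2 * s^2)" by (simp add: algebra_simps)
    also have "\<dots> \<le> M^2 * (norm v)^2" using nv by (rule mult_left_mono) simp
    finally have "t^2 * (M^2 + g^2) \<le> M^2 * (norm v)^2" .
    then have "t^2 \<le> M^2 * (norm v)^2 / (M^2 + g^2)" using den by (simp add: le_divide_eq)
    also have "\<dots> = (c0 * norm v)^2" by (simp add: c0sq power_mult_distrib)
    finally have "t^2 \<le> (c0 * norm v)^2" .
    then have "t \<le> c0 * norm v" using c0_0 power2_le_imp_le[of t "c0 * norm v"] by simp
    then show "norm ((mat 1 - g *\<^sub>R Q D) *v v) \<le> c0 * norm v" using fv t_def by simp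
  qed
  then show ?thesis using c0_1 unfolding phi_def by simp
qed

end

lemma sum3_prod: "(\<Sum>a\<in>A. \<Sum>b\<in>B. \<Sum>c\<in>C. F a b c) = (\<Sum>x\<in>A \<times> B \<times> C. F (fst x) (fst (snd x)) (snd (snd x)))"
  by (simp add: sum.cartesian_product split_def)

lemma CS3:
  fixes f h :: "'a \<Rightarrow> 'b \<Rightarrow> 'c \<Rightarrow> real"
  shows "(\<Sum>a\<in>A. \<Sum>b\<in>B. \<Sum>c\<in>C. f a b c * h a b c)
    \<le> sqrt (\<Sum>a\<in>A. \<Sum>b\<in>B. \<Sum>c\<in>C. (f a b c)^2) * sqrt (\<Sum>a\<in>A. \<Sum>b\<in>B. \<Sum>c\<in>C. (h a b c)^2)"
proof -
  define I where "I = A \<times> B \<times> C"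
  define F where "F = (\<lambda>x. f (fst x) (fst (snd x)) (snd (snd x)))"
  define H where "H = (\<lambda>x. h (fst x) (fst (snd x)) (snd (snd x)))"
  have e1: "(\<Sum>a\<in>A. \<Sum>b\<in>B. \<Sum>c\<in>C. f a b c * h a b c) = (\<Sum>x\<in>I. F x * H x)"
    unfolding sum3_prod I_def F_def H_def ..
  have e2: "(\<Sum>a\<in>A. \<Sum>b\<in>B. \<Sum>c\<in>C. (f a b c)^2) = (\<Sum>x\<in>I. (F x)^2)"
    unfolding sum3_prod I_def F_def ..
  have e3: "(\<Sum>a\<in>A. \<Sum>b\<in>B. \<Sum>c\<in>C. (h a b c)^2) = (\<Sum>x\<in>I. (H x)^2)"
    unfolding sum3_prod I_def H_def ..
  have "(\<Sum>x\<in>I. F x * H x)^2 \<le> (\<Sum>x\<in>I. (F x)^2) * (\<Sum>x\<in>I. (H x)^2)"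
    by (rule Cauchy_Schwarz_ineq_sum)
  then have "sqrt ((\<Sum>x\<in>I. F x * H x)^2) \<le> sqrt ((\<Sum>x\<in>I. (F x)^2) * (\<Sum>x\<in>I. (H x)^2))"
    by (rule real_sqrt_le_mono)
  then have "(\<Sum>x\<in>I. F x * H x) \<le> sqrt (\<Sum>x\<in>I. (F x)^2) * sqrt (\<Sum>x\<in>I. (H x)^2)"
    by (simp add: real_sqrt_mult)
  then show ?thesis using e1 e2 e3 by simp
qed

context sett begin

definition Tv :: "real^'n \<Rightarrow> real^'n" where
  "Tv D = (\<chi> i. (1 / real CARD('n)) * trace (S i ** Q D))"

lemma Tv_U: "Tv D $ i = (1 / real CARD('n)) * (\<Sum>k\<in>UNIV. U i k \<bullet> (Q D *v U i k))"
  by (simp add: Tv_def trace_U)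

lemma qform:
  assumes "\<forall>i. 0 \<le> D$i"
  shows "u \<bullet> (Q D *v u) = (Q D *v u) \<bullet> (Am S D *v (Q D *v u)) + g * ((Q D *v u) \<bullet> (Q D *v u))"
proof -
  define y where "y = Q D *v u"
  have u: "u = Bm g S D *v y" using BQ[OF assms] by (simp add: y_def)
  have "u \<bullet> (Q D *v u) = (Bm g S D *v y) \<bullet> y" using u y_def by simp
  also have "\<dots> = y \<bullet> (Bm g S D *v y)" by (simp add: inner_commute)
  finally show ?thesis by (simp add: Bm_quad y_def)
qed

lemma qpos:
  assumes "\<forall>i. 0 \<le> D$i"
  shows "0 \<le> u \<bullet> (Q D *v u)" "u \<noteq> 0 \<Longrightarrow> 0 < u \<bullet> (Q D *v u)"
proof -
  define y where "y = Q D *v u"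
  have u: "u = Bm g S D *v y" using BQ[OF assms] by (simp add: y_def)
  have q: "u \<bullet> (Q D *v u) = y \<bullet> (Am S D *v y) + g * (y \<bullet> y)" using qform[OF assms] y_def by simp
  have a: "0 \<le> y \<bullet> (Am S D *v y)" by (rule Am_psd[OF assms])
  show "0 \<le> u \<bullet> (Q D *v u)" using q a gpos by simp
  assume "u \<noteq> 0"
  then have "y \<noteq> 0" using u by auto
  then have "0 < y \<bullet> y" by simp
  then show "0 < u \<bullet> (Q D *v u)" using q a gpos by (simp add: add_nonneg_pos)
qed

lemma qupper:
  assumes "\<forall>i. 0 \<le> D$i"
  shows "u \<bullet> (Q D *v u) \<le> (u \<bullet> u) / g"
proof -
  define y where "y = Q D *v u"
  have u: "u = Bm g S D *v y" using BQ[OF assms] by (simp add: y_def)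
  define a where "a = Am S D *v y"
  have q: "u \<bullet> (Q D *v u) = y \<bullet> a + g * (y \<bullet> y)" using qform[OF assms] y_def a_def by simp
  have a0: "0 \<le> y \<bullet> a" unfolding a_def by (rule Am_psd[OF assms])
  have "u \<bullet> u = (a + g *\<^sub>R y) \<bullet> (a + g *\<^sub>R y)" using u by (simp add: Bm_mv a_def)
  also have "\<dots> = a \<bullet> a + 2 * g * (y \<bullet> a) + g * g * (y \<bullet> y)"
    by (simp add: inner_add_left inner_add_right inner_commute[of y a] algebra_simps)
  finally have uu: "u \<bullet> u = a \<bullet> a + 2 * g * (y \<bullet> a) + g * g * (y \<bullet> y)" .
  have "g * (u \<bullet> (Q D *v u)) \<le> u \<bullet> u"
    unfolding q uu using a0 gpos by (simp add: algebra_simps)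
  then show ?thesis using gpos by (simp add: le_divide_eq mult.commute)
qed

lemma Tv_pos:
  assumes "\<forall>i. 0 \<le> D$i"
  shows "0 < Tv D $ i"
proof -
  obtain k where k: "U i k \<noteq> 0" using Snz_U by blast
  have "0 < U i k \<bullet> (Q D *v U i k)" using qpos(2)[OF assms k] .
  also have "\<dots> \<le> (\<Sum>k\<in>UNIV. U i k \<bullet> (Q D *v U i k))"
    by (rule member_le_sum) (auto simp: qpos(1)[OF assms])
  finally show ?thesis by (simp add: Tv_U)
qed

definition bnd :: "'n \<Rightarrow> real" where
  "bnd i = (1 / real CARD('n)) * (\<Sum>k\<in>UNIV. (U i k \<bullet> U i k) / g)"

lemma Tv_le:
  assumes "\<forall>i. 0 \<le> D$i"
  shows "Tv D $ i \<le> bnd i"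
  unfolding Tv_U bnd_def
  by (intro mult_left_mono sum_mono qupper[OF assms]) simp

lemma contr:
  assumes D0: "\<forall>j. 0 \<le> D$j" and D0': "\<forall>j. 0 \<le> D'$j"
    and DE: "\<forall>j. D$j \<le> E$j" and DE': "\<forall>j. D'$j \<le> E'$j"
    and e: "\<forall>j. \<bar>D$j - D'$j\<bar> \<le> e * sqrt (D$j * D'$j)" and e0: "0 \<le> e"
  shows "\<bar>Tv D $ i - Tv D' $ i\<bar> \<le> e * (sqrt (phi g S E * Tv D $ i) * sqrt (phi g S E' * Tv D' $ i))"
proof -
  define n where "n = real CARD('n)"
  have n0: "0 < n" by (simp add: n_def)
  define u where "u = U i"
  define a where "a = (\<lambda>k j l. U j l \<bullet> (Q D *v u k))"
  define b where "b = (\<lambda>k j l. U j l \<bullet> (Q D' *v u k))"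
  define c where "c = phi g S E"
  define c' where "c' = phi g S E'"
  have c0: "0 \<le> c" "0 \<le> c'" unfolding c_def c'_def by (rule phi_nonneg)+
  have diff: "Tv D $ i - Tv D' $ i = (1/n) * (\<Sum>k\<in>UNIV. (1/n) * (\<Sum>j\<in>UNIV. (D'$j - D$j) * (\<Sum>l\<in>UNIV. a k j l * b k j l)))"
  proof -
    have "Tv D $ i - Tv D' $ i = (1/n) * (\<Sum>k\<in>UNIV. u k \<bullet> (Q D *v u k) - u k \<bullet> (Q D' *v u k))"
      by (simp add: Tv_U n_def u_def sum_subtractf right_diff_distrib)
    also have "\<dots> = (1/n) * (\<Sum>k\<in>UNIV. (1/n) * (\<Sum>j\<in>UNIV. (D'$j - D$j) * (\<Sum>l\<in>UNIV. a k j l * b k j l)))"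
      unfolding quad_diff[OF D0 D0'] a_def b_def n_def ..
    finally show ?thesis .
  qed
  define X where "X = (\<Sum>k\<in>UNIV. \<Sum>j\<in>UNIV. \<Sum>l\<in>UNIV. (sqrt (D$j) * \<bar>a k j l\<bar>) * (sqrt (D'$j) * \<bar>b k j l\<bar>))"
  have step1: "\<bar>\<Sum>j\<in>UNIV. (D'$j - D$j) * (\<Sum>l\<in>UNIV. a k j l * b k j l)\<bar>
      \<le> e * (\<Sum>j\<in>UNIV. \<Sum>l\<in>UNIV. (sqrt (D$j) * \<bar>a k j l\<bar>) * (sqrt (D'$j) * \<bar>b k j l\<bar>))" for k
  proof -
    have "\<bar>\<Sum>j\<in>UNIV. (D'$j - D$j) * (\<Sum>l\<in>UNIV. a k j l * b k j l)\<bar>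
        \<le> (\<Sum>j\<in>UNIV. \<bar>(D'$j - D$j) * (\<Sum>l\<in>UNIV. a k j l * b k j l)\<bar>)" by (rule sum_abs)
    also have "\<dots> \<le> (\<Sum>j\<in>UNIV. e * (\<Sum>l\<in>UNIV. (sqrt (D$j) * \<bar>a k j l\<bar>) * (sqrt (D'$j) * \<bar>b k j l\<bar>)))"
    proof (rule sum_mono)
      fix j :: 'n
      have "\<bar>\<Sum>l\<in>UNIV. a k j l * b k j l\<bar> \<le> (\<Sum>l\<in>UNIV. \<bar>a k j l * b k j l\<bar>)" by (rule sum_abs)
      also have "\<dots> = (\<Sum>l\<in>UNIV. \<bar>a k j l\<bar> * \<bar>b k j l\<bar>)" by (simp add: abs_mult)
      finally have s1: "\<bar>\<Sum>l\<in>UNIV. a k j l * b k j l\<bar> \<le> (\<Sum>l\<in>UNIV. \<bar>a k j l\<bar> * \<bar>b k j l\<bar>)" .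
      have "\<bar>(D'$j - D$j) * (\<Sum>l\<in>UNIV. a k j l * b k j l)\<bar>
          = \<bar>D$j - D'$j\<bar> * \<bar>\<Sum>l\<in>UNIV. a k j l * b k j l\<bar>" by (simp add: abs_mult abs_minus_commute)
      also have "\<dots> \<le> (e * sqrt (D$j * D'$j)) * (\<Sum>l\<in>UNIV. \<bar>a k j l\<bar> * \<bar>b k j l\<bar>)"
        using e s1 e0 D0 D0' by (intro mult_mono) (auto intro: sum_nonneg)
      also have "\<dots> = e * (\<Sum>l\<in>UNIV. (sqrt (D$j) * \<bar>a k j l\<bar>) * (sqrt (D'$j) * \<bar>b k j l\<bar>))"
        by (simp add: real_sqrt_mult sum_distrib_left algebra_simps)
      finally show "\<bar>(D'$j - D$j) * (\<Sum>l\<in>UNIV. a k j l * b k j l)\<bar>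
          \<le> e * (\<Sum>l\<in>UNIV. (sqrt (D$j) * \<bar>a k j l\<bar>) * (sqrt (D'$j) * \<bar>b k j l\<bar>))" .
    qed
    also have "\<dots> = e * (\<Sum>j\<in>UNIV. \<Sum>l\<in>UNIV. (sqrt (D$j) * \<bar>a k j l\<bar>) * (sqrt (D'$j) * \<bar>b k j l\<bar>))"
      by (simp add: sum_distrib_left)
    finally show ?thesis .
  qed
  have absdiff: "\<bar>Tv D $ i - Tv D' $ i\<bar> \<le> (1/n) * (1/n) * e * X"
  proof -
    have "\<bar>Tv D $ i - Tv D' $ i\<bar> = (1/n) * \<bar>\<Sum>k\<in>UNIV. (1/n) * (\<Sum>j\<in>UNIV. (D'$j - D$j) * (\<Sum>l\<in>UNIV. a k j l * b k j l))\<bar>"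
      unfolding diff using n0 by (simp add: abs_mult)
    also have "\<dots> \<le> (1/n) * (\<Sum>k\<in>UNIV. \<bar>(1/n) * (\<Sum>j\<in>UNIV. (D'$j - D$j) * (\<Sum>l\<in>UNIV. a k j l * b k j l))\<bar>)"
      using n0 by (intro mult_left_mono sum_abs) simp
    also have "\<dots> \<le> (1/n) * (\<Sum>k\<in>UNIV. (1/n) * (e * (\<Sum>j\<in>UNIV. \<Sum>l\<in>UNIV. (sqrt (D$j) * \<bar>a k j l\<bar>) * (sqrt (D'$j) * \<bar>b k j l\<bar>))))"
      using n0 step1 by (intro mult_left_mono sum_mono) (simp_all add: abs_mult divide_right_mono)
    also have "\<dots> = (1/n) * (1/n) * e * X"
      by (simp add: X_def sum_distrib_left)
    finally show ?thesis .
  qed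
  have sq: "(\<Sum>k\<in>UNIV. \<Sum>j\<in>UNIV. \<Sum>l\<in>UNIV. (sqrt (F$j) * \<bar>U j l \<bullet> (Q F *v u k)\<bar>)^2) \<le> n * n * (phi g S G * Tv F $ i)"
    if F0: "\<forall>j. 0 \<le> F$j" and FG: "\<forall>j. F$j \<le> G$j" for F G
  proof -
    have "(\<Sum>k\<in>UNIV. \<Sum>j\<in>UNIV. \<Sum>l\<in>UNIV. (sqrt (F$j) * \<bar>U j l \<bullet> (Q F *v u k)\<bar>)^2)
       = (\<Sum>k\<in>UNIV. \<Sum>j\<in>UNIV. F$j * ((Q F *v u k) \<bullet> (S j *v (Q F *v u k))))"
    proof (intro sum.cong refl)
      fix k j
      have "(Q F *v u k) \<bullet> (S j *v (Q F *v u k)) = (S j *v (Q F *v u k)) \<bullet> (Q F *v u k)" by (simp add: inner_commute)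
      also have "\<dots> = (\<Sum>l\<in>UNIV. (U j l \<bullet> (Q F *v u k))^2)" by (simp add: S_U power2_eq_square)
      finally show "(\<Sum>l\<in>UNIV. (sqrt (F$j) * \<bar>U j l \<bullet> (Q F *v u k)\<bar>)^2) = F$j * ((Q F *v u k) \<bullet> (S j *v (Q F *v u k)))"
        using F0 by (simp add: power_mult_distrib sum_distrib_left)
    qed
    also have "\<dots> = (\<Sum>k\<in>UNIV. n * ((Q F *v u k) \<bullet> (Am S F *v (Q F *v u k))))"
      using n0 by (simp add: Am_quad n_def)
    also have "\<dots> \<le> (\<Sum>k\<in>UNIV. n * (phi g S G * (u k \<bullet> (Q F *v u k))))"
    proof (intro sum_mono mult_left_mono)
      fix k
      show "(Q F *v u k) \<bullet> (Am S F *v (Q F *v u k)) \<le> phi g S G * (u k \<bullet> (Q F *v u k))"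
        using phi_bound[OF F0 FG, of "Q F *v u k"] qform[OF F0, of "u k"] by simp
    qed (use n0 in simp)
    also have "\<dots> = n * n * (phi g S G * Tv F $ i)"
      using n0 by (simp add: Tv_U n_def u_def sum_distrib_left)
    finally show ?thesis .
  qed
  have X_le: "X \<le> (n * sqrt (c * Tv D $ i)) * (n * sqrt (c' * Tv D' $ i))"
  proof -
    have "X \<le> sqrt (\<Sum>k\<in>UNIV. \<Sum>j\<in>UNIV. \<Sum>l\<in>UNIV. (sqrt (D$j) * \<bar>a k j l\<bar>)^2)
             * sqrt (\<Sum>k\<in>UNIV. \<Sum>j\<in>UNIV. \<Sum>l\<in>UNIV. (sqrt (D'$j) * \<bar>b k j l\<bar>)^2)"
      unfolding X_def by (rule CS3)
    also have "\<dots> \<le> sqrt (n * n * (c * Tv D $ i)) * sqrt (n * n * (c' * Tv D' $ i))"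
      using sq[OF D0 DE] sq[OF D0' DE'] c0 Tv_pos[OF D0, of i] n0 unfolding a_def b_def c_def c'_def
      by (intro mult_mono real_sqrt_le_mono) (auto intro!: sum_nonneg)
    also have "\<dots> = (n * sqrt (c * Tv D $ i)) * (n * sqrt (c' * Tv D' $ i))"
      using n0 by (simp add: real_sqrt_mult)
    finally show ?thesis .
  qed
  have "\<bar>Tv D $ i - Tv D' $ i\<bar> \<le> (1/n) * (1/n) * e * ((n * sqrt (c * Tv D $ i)) * (n * sqrt (c' * Tv D' $ i)))"
    using absdiff X_le e0 n0 by (smt (verit) mult_left_mono mult_nonneg_nonneg divide_nonneg_pos)
  also have "\<dots> = e * (sqrt (c * Tv D $ i) * sqrt (c' * Tv D' $ i))"
    using n0 by (simp add: field_simps)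
  finally show ?thesis unfolding c_def c'_def .
qed

end

lemma inv_ds:
  fixes p p' k :: real
  assumes "0 < p" "0 < p'" "\<bar>p - p'\<bar> \<le> k * sqrt (p * p')"
  shows "\<bar>1/p - 1/p'\<bar> \<le> k * sqrt (1/p * (1/p'))"
proof -
  have s: "sqrt (p * p') > 0" using assms by simp
  have "\<bar>1/p - 1/p'\<bar> = \<bar>p - p'\<bar> / (p * p')" using assms by (simp add: field_simps abs_minus_commute)
  also have "\<dots> \<le> k * sqrt (p * p') / (p * p')" using assms by (simp add: divide_right_mono)
  also have "\<dots> = k / sqrt (p * p')"
  proof -
    have "p * p' = sqrt (p * p') * sqrt (p * p')" using assms(1,2) by simp
    then show ?thesis using s by (metis nonzero_mult_divide_mult_cancel_right2 less_irrefl mult.commute times_divide_eq_left divide_divide_eq_left)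
  qed
  also have "\<dots> = k * sqrt (1/p * (1/p'))"
  proof -
    have "sqrt (1/p * (1/p')) = sqrt 1 / sqrt (p * p')" by (simp only: real_sqrt_divide[symmetric]) simp
    then show ?thesis by simp
  qed
  finally show ?thesis .
qed

lemma sqrt_sum_le:
  fixes a b c d :: real
  assumes "0 \<le> a" "0 \<le> b" "0 \<le> c" "0 \<le> d"
  shows "sqrt (a*b) + sqrt (c*d) \<le> sqrt ((a+c)*(b+d))"
proof -
  have am: "2 * sqrt (a*d) * sqrt (c*b) \<le> a*d + c*b"
  proof -
    have "0 \<le> (sqrt (a*d) - sqrt (c*b))^2" by simp
    then show ?thesis using assms by (simp add: power2_eq_square algebra_simps)
  qed
  have "(sqrt (a*b) + sqrt (c*d))^2 = a*b + c*d + 2 * sqrt (a*d) * sqrt (c*b)"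
    using assms by (simp add: power2_eq_square algebra_simps real_sqrt_mult)
  also have "\<dots> \<le> (a+c)*(b+d)" using am by (simp add: algebra_simps)
  finally have "(sqrt (a*b) + sqrt (c*d))^2 \<le> (a+c)*(b+d)" .
  then show ?thesis using assms by (simp add: real_le_rsqrt)
qed

lemma harm:
  fixes x x' y y' e :: real
  assumes "0<x" "0<x'" "0<y" "0<y'" "\<bar>x-x'\<bar> \<le> e* sqrt(x*x')" "\<bar>y-y'\<bar> \<le> e* sqrt(y*y')" "0 \<le> e"
  shows "\<bar>x/(1+x*y) - x'/(1+x'*y')\<bar> \<le> e * sqrt(x/(1+x*y) * (x'/(1+x'*y')))"
proof -
  define p where "p = 1/x + y"
  define p' where "p' = 1/x' + y'"
  have pp: "0 < p" "0 < p'" using assms by (simp_all add: p_def p'_def add_pos_pos)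
  have e1: "x/(1+x*y) = 1/p" "x'/(1+x'*y') = 1/p'" using assms by (simp_all add: p_def p'_def field_simps)
  have "\<bar>1/x - 1/x'\<bar> \<le> e * sqrt (1/x * (1/x'))"
    by (rule inv_ds) (use assms in auto)
  then have "\<bar>p - p'\<bar> \<le> e * sqrt (1/x * (1/x')) + e * sqrt (y*y')"
    using assms(6) unfolding p_def p'_def by linarith
  also have "\<dots> = e * (sqrt (1/x * (1/x')) + sqrt (y*y'))" by (simp add: algebra_simps)
  also have "\<dots> \<le> e * sqrt (p * p')"
    unfolding p_def p'_def using assms by (intro mult_left_mono sqrt_sum_le) auto
  finally have "\<bar>p - p'\<bar> \<le> e * sqrt (p * p')" .
  then show ?thesis unfolding e1 using inv_ds pp by blast
qed

lemma harm_cont: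
  fixes x y y' :: real
  assumes "0<x" "0\<le>y" "0\<le>y'"
  shows "\<bar>x/(1+x*y) - x/(1+x*y')\<bar> \<le> (x * \<bar>y - y'\<bar>) * sqrt(x/(1+x*y) * (x/(1+x*y')))"
proof -
  define p where "p = 1/x + y"
  define p' where "p' = 1/x + y'"
  have pp: "0 < p" "0 < p'" using assms by (simp_all add: p_def p'_def add_pos_nonneg)
  have e1: "x/(1+x*y) = 1/p" "x/(1+x*y') = 1/p'" using assms by (simp_all add: p_def p'_def field_simps)
  have px: "1/x \<le> p" "1/x \<le> p'" using assms by (simp_all add: p_def p'_def)
  have "1/x * (1/x) \<le> p * p'" using px assms pp by (intro mult_mono) auto
  then have "sqrt (1/x * (1/x)) \<le> sqrt (p * p')" by (rule real_sqrt_le_mono)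
  moreover have "sqrt (1/x * (1/x)) = 1/x" using assms by (simp only: real_sqrt_abs2) simp
  ultimately have sq: "1/x \<le> sqrt (p * p')" by linarith
  have "\<bar>p - p'\<bar> = x * \<bar>y - y'\<bar> * (1/x)" using assms by (simp add: p_def p'_def)
  also have "\<dots> \<le> x * \<bar>y - y'\<bar> * sqrt (p * p')" using sq assms by (intro mult_left_mono) auto
  finally show ?thesis unfolding e1 using inv_ds pp by blast
qed

lemma ds_ge:
  fixes x y :: "real^'n::finite"
  shows "\<bar>x$i - y$i\<bar> / sqrt (x$i * y$i) \<le> d_s x y"
  unfolding d_s_def by (rule Max_ge) auto

lemma ds_le:
  fixes x y :: "real^'n::finite"
  assumes "\<And>i. \<bar>x$i - y$i\<bar> / sqrt (x$i * y$i) \<le> e"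
  shows "d_s x y \<le> e"
  unfolding d_s_def using assms by (intro Max.boundedI) auto

lemma ds_nonneg:
  fixes x y :: "real^'n::finite"
  assumes "pos_diag x" "pos_diag y"
  shows "0 \<le> d_s x y"
proof -
  obtain i :: 'n where True by blast
  have "0 \<le> \<bar>x$i - y$i\<bar> / sqrt (x$i * y$i)" using assms unfolding pos_diag_def
    by (intro divide_nonneg_nonneg) (auto intro: mult_nonneg_nonneg less_imp_le)
  then show ?thesis using ds_ge[where x=x and y=y and i=i] by linarith
qed

lemma ds_mul:
  fixes x y :: "real^'n::finite"
  assumes "pos_diag x" "pos_diag y"
  shows "\<bar>x$i - y$i\<bar> \<le> d_s x y * sqrt (x$i * y$i)"
proof -
  have "0 < sqrt (x$i * y$i)" using assms by (simp add: pos_diag_def)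
  then show ?thesis using ds_ge[where x=x and y=y and i=i] by (simp add: divide_le_eq)
qed

lemma ds_le2:
  fixes x y :: "real^'n::finite"
  assumes "pos_diag x" "pos_diag y" "\<And>i. \<bar>x$i - y$i\<bar> \<le> e * sqrt (x$i * y$i)"
  shows "d_s x y \<le> e"
proof (rule ds_le)
  fix i
  have "0 < sqrt (x$i * y$i)" using assms by (simp add: pos_diag_def)
  then show "\<bar>x$i - y$i\<bar> / sqrt (x$i * y$i) \<le> e" using assms(3)[of i] by (simp add: divide_le_eq)
qed

lemma ds_zero:
  fixes x y :: "real^'n::finite"
  assumes "pos_diag x" "pos_diag y" "d_s x y \<le> 0"
  shows "x = y"
proof -
  have "\<bar>x$i - y$i\<bar> \<le> 0" for i
    using ds_mul[OF assms(1,2), where i=i] assms(3) assms(1,2)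
    by (smt (verit) mult_nonpos_nonneg real_sqrt_ge_zero mult_nonneg_nonneg pos_diag_def)
  then show ?thesis by (simp add: vec_eq_iff)
qed

context sett begin

definition Dv :: "real^'n \<Rightarrow> real^'n \<Rightarrow> real^'n" where
  "Dv E L = (\<chi> j. E$j / (1 + E$j * L$j))"

lemma Lambda_eq_iff: "Lambda_eq g S E L \<longleftrightarrow> pos_diag L \<and> L = Tv (Dv E L)"
  by (simp add: Lambda_eq_def Tv_def Qmat_def Dv_def vec_eq_iff)

lemma Dv_pos:
  assumes "pos_diag E" "\<forall>j. 0 \<le> L$j"
  shows "\<forall>j. 0 \<le> Dv E L $ j" "\<forall>j. Dv E L $ j \<le> E$j" "\<forall>j. 0 < Dv E L $ j"
proof -
  have "0 < Dv E L $ j" for j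
  proof -
    have "0 < E$j" "0 \<le> L$j" using assms unfolding pos_diag_def by auto
    then have "0 < 1 + E$j * L$j" by (simp add: add_pos_nonneg)
    then show ?thesis using \<open>0 < E$j\<close> unfolding Dv_def by simp
  qed
  then show "\<forall>j. 0 \<le> Dv E L $ j" "\<forall>j. 0 < Dv E L $ j" by (auto simp: less_imp_le)
  have "Dv E L $ j \<le> E$j" for j
  proof -
    have "0 < E$j" "0 \<le> L$j" using assms unfolding pos_diag_def by auto
    then have "1 \<le> 1 + E$j * L$j" by simp
    then show ?thesis using \<open>0 < E$j\<close> unfolding Dv_def
      by (simp add: divide_le_eq)
  qed
  then show "\<forall>j. Dv E L $ j \<le> E$j" by blast
qed

lemma bnd_nonneg: "0 \<le> bnd i"
  unfolding bnd_def using gpos by (intro mult_nonneg_nonneg sum_nonneg divide_nonneg_pos) auto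

lemma uniq:
  assumes E: "pos_diag E" and L: "Lambda_eq g S E L" and L': "Lambda_eq g S E L'"
  shows "L = L'"
proof -
  have pL: "pos_diag L" and fL: "L = Tv (Dv E L)" using L Lambda_eq_iff by auto
  have pL': "pos_diag L'" and fL': "L' = Tv (Dv E L')" using L' Lambda_eq_iff by auto
  define d where "d = d_s L L'"
  have d0: "0 \<le> d" unfolding d_def by (rule ds_nonneg[OF pL pL'])
  have L0: "\<forall>j. 0 \<le> L$j" "\<forall>j. 0 \<le> L'$j" using pL pL' unfolding pos_diag_def by (auto simp: less_imp_le)
  note D = Dv_pos[OF E L0(1)] and D' = Dv_pos[OF E L0(2)]
  define c where "c = phi g S E"
  have c0: "0 \<le> c" "c < 1" unfolding c_def using phi_nonneg phi_lt1 E unfolding pos_diag_def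
    by (auto simp: less_imp_le)
  have e: "\<forall>j. \<bar>Dv E L $ j - Dv E L' $ j\<bar> \<le> d * sqrt (Dv E L $ j * Dv E L' $ j)"
  proof
    fix j
    have "\<bar>E$j - E$j\<bar> \<le> d * sqrt (E$j * E$j)" using d0 E unfolding pos_diag_def by simp
    moreover have "\<bar>L$j - L'$j\<bar> \<le> d * sqrt (L$j * L'$j)" unfolding d_def by (rule ds_mul[OF pL pL'])
    ultimately show "\<bar>Dv E L $ j - Dv E L' $ j\<bar> \<le> d * sqrt (Dv E L $ j * Dv E L' $ j)"
      unfolding Dv_def using harm[of "E$j" "E$j" "L$j" "L'$j" d] E pL pL' d0 unfolding pos_diag_def by simp
  qed
  have "\<bar>L$i - L'$i\<bar> \<le> (c * d) * sqrt (L$i * L'$i)" for i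
  proof -
    have "\<bar>L$i - L'$i\<bar> \<le> d * (sqrt (c * L$i) * sqrt (c * L'$i))"
      using contr[OF D(1) D'(1) D(2) D'(2) e d0, of i] fL fL' unfolding c_def by metis
    also have "\<dots> = (c * d) * sqrt (L$i * L'$i)"
      using c0 by (simp add: real_sqrt_mult algebra_simps)
    finally show ?thesis .
  qed
  then have "d \<le> c * d" unfolding d_def by (intro ds_le2[OF pL pL']) (simp add: d_def)
  then have "d \<le> 0" using c0 d0 by (smt (verit) mult_le_cancel_right1)
  then show ?thesis using ds_zero[OF pL pL'] d_def by simp
qed

lemma existence:
  assumes E: "pos_diag E"
  shows "\<exists>L. Lambda_eq g S E L"
proof -
  define K where "K = cbox (0::real^'n) (\<chi> i. bnd i)"
  define F where "F = (\<lambda>L. Tv (Dv E L))"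
  have K0: "L \<in> K \<Longrightarrow> \<forall>j. 0 \<le> L$j" for L by (simp add: K_def mem_box_cart)
  have c1: "phi g S E \<le> 1" using phi_lt1 E unfolding pos_diag_def by (auto simp: less_imp_le)
  have Fin: "F \<in> K \<rightarrow> K"
  proof
    fix L assume "L \<in> K"
    note D = Dv_pos[OF E K0[OF \<open>L \<in> K\<close>]]
    show "F L \<in> K" unfolding K_def mem_box_cart F_def
      using Tv_pos[OF D(1)] Tv_le[OF D(1)] by (auto simp: less_imp_le)
  qed
  define C where "C = (\<Sum>j\<in>UNIV. E$j) * (\<Sum>i\<in>UNIV. bnd i)"
  have C0: "0 \<le> C" unfolding C_def using E bnd_nonneg unfolding pos_diag_def
    by (intro mult_nonneg_nonneg sum_nonneg) (auto simp: less_imp_le)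
  have lip: "C-lipschitz_on K F"
  proof (rule lipschitz_onI[OF _ C0])
    fix L L' assume LK: "L \<in> K" and LK': "L' \<in> K"
    note D = Dv_pos[OF E K0[OF LK]] and D' = Dv_pos[OF E K0[OF LK']]
    define e where "e = (\<Sum>j\<in>UNIV. E$j) * norm (L - L')"
    have e0: "0 \<le> e" unfolding e_def using E unfolding pos_diag_def by (intro mult_nonneg_nonneg sum_nonneg) (auto simp: less_imp_le)
    have ej: "\<forall>j. \<bar>Dv E L $ j - Dv E L' $ j\<bar> \<le> e * sqrt (Dv E L $ j * Dv E L' $ j)"
    proof
      fix j
      have "\<bar>Dv E L $ j - Dv E L' $ j\<bar> \<le> (E$j * \<bar>L$j - L'$j\<bar>) * sqrt (Dv E L $ j * Dv E L' $ j)"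
        unfolding Dv_def using harm_cont[of "E$j" "L$j" "L'$j"] E K0[OF LK] K0[OF LK'] unfolding pos_diag_def by simp
      also have "\<dots> \<le> e * sqrt (Dv E L $ j * Dv E L' $ j)"
      proof (rule mult_right_mono)
        have "\<bar>L$j - L'$j\<bar> \<le> norm (L - L')" using component_le_norm_cart[of "L - L'" j] by simp
        moreover have "E$j \<le> (\<Sum>j\<in>UNIV. E$j)"
          using E unfolding pos_diag_def by (intro member_le_sum) (auto simp: less_imp_le)
        moreover have "0 \<le> E$j" using E unfolding pos_diag_def by (auto simp: less_imp_le)
        ultimately show "E$j * \<bar>L$j - L'$j\<bar> \<le> e" unfolding e_def by (intro mult_mono) auto
      qed (use D(1) D'(1) in \<open>simp add: mult_nonneg_nonneg\<close>)
      finally show "\<bar>Dv E L $ j - Dv E L' $ j\<bar> \<le> e * sqrt (Dv E L $ j * Dv E L' $ j)" .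
    qed
    have ci: "\<bar>F L $ i - F L' $ i\<bar> \<le> e * bnd i" for i
    proof -
      have "\<bar>F L $ i - F L' $ i\<bar> \<le> e * (sqrt (phi g S E * F L $ i) * sqrt (phi g S E * F L' $ i))"
        unfolding F_def by (rule contr[OF D(1) D'(1) D(2) D'(2) ej e0])
      also have "\<dots> \<le> e * (sqrt (bnd i) * sqrt (bnd i))"
      proof (intro mult_left_mono mult_mono real_sqrt_le_mono e0)
        have p: "0 < F L $ i" "0 < F L' $ i" "F L $ i \<le> bnd i" "F L' $ i \<le> bnd i"
          unfolding F_def using Tv_pos[OF D(1)] Tv_pos[OF D'(1)] Tv_le[OF D(1)] Tv_le[OF D'(1)] by auto
        have c0: "0 \<le> phi g S E" by (rule phi_nonneg)
        show "phi g S E * F L $ i \<le> bnd i" using p c0 c1 by (metis less_imp_le mult_left_le_one_le order_trans)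
        show "phi g S E * F L' $ i \<le> bnd i" using p c0 c1 by (metis less_imp_le mult_left_le_one_le order_trans)
      qed (use phi_nonneg[of E] Tv_pos[OF D'(1), of i] bnd_nonneg[of i] in \<open>simp_all add: F_def\<close>)
      also have "\<dots> = e * bnd i" using bnd_nonneg by simp
      finally show ?thesis .
    qed
    have "dist (F L) (F L') = norm (F L - F L')" by (simp add: dist_norm)
    also have "\<dots> \<le> (\<Sum>i\<in>UNIV. \<bar>(F L - F L') $ i\<bar>)" by (rule norm_le_l1_cart)
    also have "\<dots> \<le> (\<Sum>i\<in>UNIV. e * bnd i)" using ci by (intro sum_mono) simp
    also have "\<dots> = e * (\<Sum>i\<in>UNIV. bnd i)" by (simp add: sum_distrib_left)
    also have "\<dots> = C * dist L L'" by (simp add: C_def e_def dist_norm)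
    finally show "dist (F L) (F L') \<le> C * dist L L'" .
  qed
  have cont: "continuous_on K F" by (rule lipschitz_on_continuous_on[OF lip])
  have "0 \<in> K" unfolding K_def using bnd_nonneg by (simp add: mem_box_cart)
  then have ne: "K \<noteq> {}" by blast
  obtain L where LK: "L \<in> K" and fx: "F L = L"
    using brouwer[OF compact_cbox[of 0 "\<chi> i. bnd i"] convex_box(1) _ _ Fin[unfolded K_def]] ne cont
    unfolding K_def by blast
  have "pos_diag L" unfolding pos_diag_def
  proof
    fix i
    have "0 < F L $ i" unfolding F_def by (rule Tv_pos[OF Dv_pos(1)[OF E K0[OF LK]]])
    then show "0 < L $ i" using fx by simp
  qed
  then show ?thesis using fx unfolding Lambda_eq_iff F_def by metis
qed

lemma LambdaS_eq:
  assumes "pos_diag E"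
  shows "Lambda_eq g S E (LambdaS g S E)"
proof -
  obtain L where L: "Lambda_eq g S E L" using existence[OF assms] by blast
  show ?thesis unfolding LambdaS_def
  proof (rule theI[of _ L])
    show "Lambda_eq g S E L" by (rule L)
  next
    fix x assume "Lambda_eq g S E x"
    then show "x = L" using uniq[OF assms L] by metis
  qed
qed

lemma LambdaS_pos: "pos_diag E \<Longrightarrow> pos_diag (LambdaS g S E)"
  using LambdaS_eq Lambda_eq_iff by blast

lemma main_bound:
  assumes E: "pos_diag E" and E': "pos_diag E'"
  shows "d_s (LambdaS g S E) (LambdaS g S E') \<le> max (phi g S E) (phi g S E') * d_s E E'"
proof -
  define L where "L = LambdaS g S E"
  define L' where "L' = LambdaS g S E'"
  have pL: "pos_diag L" and fL: "L = Tv (Dv E L)" using LambdaS_eq[OF E] Lambda_eq_iff L_def by auto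
  have pL': "pos_diag L'" and fL': "L' = Tv (Dv E' L')" using LambdaS_eq[OF E'] Lambda_eq_iff L'_def by auto
  have L0: "\<forall>j. 0 \<le> L$j" "\<forall>j. 0 \<le> L'$j" using pL pL' unfolding pos_diag_def by (auto simp: less_imp_le)
  note D = Dv_pos[OF E L0(1)] and D' = Dv_pos[OF E' L0(2)]
  define dE where "dE = d_s E E'"
  define dL where "dL = d_s L L'"
  define e where "e = max dE dL"
  define c where "c = phi g S E"
  define c' where "c' = phi g S E'"
  define m where "m = max c c'"
  have dE0: "0 \<le> dE" unfolding dE_def by (rule ds_nonneg[OF E E'])
  have dL0: "0 \<le> dL" unfolding dL_def by (rule ds_nonneg[OF pL pL'])
  have e0: "0 \<le> e" using dE0 by (simp add: e_def)
  have cc: "0 \<le> c" "0 \<le> c'" "c < 1" "c' < 1" unfolding c_def c'_def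
    using phi_nonneg phi_lt1 E E' unfolding pos_diag_def by (auto simp: less_imp_le)
  have m: "0 \<le> m" "m < 1" using cc by (auto simp: m_def)
  have ej: "\<forall>j. \<bar>Dv E L $ j - Dv E' L' $ j\<bar> \<le> e * sqrt (Dv E L $ j * Dv E' L' $ j)"
  proof
    fix j
    have "\<bar>E$j - E'$j\<bar> \<le> dE * sqrt (E$j * E'$j)" unfolding dE_def by (rule ds_mul[OF E E'])
    also have "\<dots> \<le> e * sqrt (E$j * E'$j)" using E E' unfolding pos_diag_def
      by (intro mult_right_mono) (auto simp: e_def intro!: mult_nonneg_nonneg less_imp_le)
    finally have a: "\<bar>E$j - E'$j\<bar> \<le> e * sqrt (E$j * E'$j)" .
    have "\<bar>L$j - L'$j\<bar> \<le> dL * sqrt (L$j * L'$j)" unfolding dL_def by (rule ds_mul[OF pL pL'])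
    also have "\<dots> \<le> e * sqrt (L$j * L'$j)" using pL pL' unfolding pos_diag_def
      by (intro mult_right_mono) (auto simp: e_def intro!: mult_nonneg_nonneg less_imp_le)
    finally have b: "\<bar>L$j - L'$j\<bar> \<le> e * sqrt (L$j * L'$j)" .
    show "\<bar>Dv E L $ j - Dv E' L' $ j\<bar> \<le> e * sqrt (Dv E L $ j * Dv E' L' $ j)"
      unfolding Dv_def using harm[of "E$j" "E'$j" "L$j" "L'$j" e] a b e0 E E' pL pL' unfolding pos_diag_def by simp
  qed
  have scc: "sqrt (c * c') \<le> m"
  proof -
    have "c * c' \<le> m * m" using cc by (intro mult_mono) (auto simp: m_def)
    then have "sqrt (c * c') \<le> sqrt (m * m)" by (rule real_sqrt_le_mono)
    then show ?thesis using m by simp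
  qed
  have "\<bar>L$i - L'$i\<bar> \<le> (m * e) * sqrt (L$i * L'$i)" for i
  proof -
    have "\<bar>L$i - L'$i\<bar> \<le> e * (sqrt (c * L$i) * sqrt (c' * L'$i))"
      using contr[OF D(1) D'(1) D(2) D'(2) ej e0, of i] fL fL' unfolding c_def c'_def by metis
    also have "\<dots> = e * sqrt (c * c') * sqrt (L$i * L'$i)"
      by (simp add: real_sqrt_mult algebra_simps)
    also have "\<dots> \<le> e * m * sqrt (L$i * L'$i)"
      using scc e0 L0 by (intro mult_right_mono mult_left_mono) (auto intro!: mult_nonneg_nonneg)
    finally show ?thesis by (simp add: algebra_simps)
  qed
  then have dLe: "dL \<le> m * e" unfolding dL_def by (intro ds_le2[OF pL pL'])
  have "dL \<le> dE"
  proof (rule ccontr)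
    assume "\<not> dL \<le> dE"
    then have "e = dL" "dE < dL" by (auto simp: e_def)
    then have "dL \<le> m * dL" using dLe by simp
    then have "(1 - m) * dL \<le> 0" by (simp add: algebra_simps)
    then have "dL \<le> 0" using m by (simp add: mult_le_0_iff)
    then show False using \<open>dE < dL\<close> dE0 by simp
  qed
  then have "e = dE" by (simp add: e_def)
  then show ?thesis using dLe unfolding dL_def dE_def L_def L'_def m_def c_def c'_def by simp
qed

end

theorem proposition5:
  fixes \<gamma> :: real and S :: "'n::finite \<Rightarrow> real^'p::finite^'p"
  assumes "\<gamma> > 0"
    and "\<And>i. nonneg_sym (S i)"
    and "\<And>i. S i \<noteq> 0"
  shows "(\<forall>\<Delta> \<Delta>'. pos_diag \<Delta> \<longrightarrow> pos_diag \<Delta>' \<longrightarrow>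
            d_s (LambdaS \<gamma> S \<Delta>) (LambdaS \<gamma> S \<Delta>')
              \<le> max (phi \<gamma> S \<Delta>) (phi \<gamma> S \<Delta>') * d_s \<Delta> \<Delta>')
         \<and> (\<forall>\<Delta>. pos_diag \<Delta> \<longrightarrow> pos_diag (LambdaS \<gamma> S \<Delta>))
         \<and> stable (LambdaS \<gamma> S)"
proof -
  interpret sett \<gamma> S using assms by unfold_locales
  have A: "\<forall>\<Delta> \<Delta>'. pos_diag \<Delta> \<longrightarrow> pos_diag \<Delta>' \<longrightarrow>
            d_s (LambdaS \<gamma> S \<Delta>) (LambdaS \<gamma> S \<Delta>')
              \<le> max (phi \<gamma> S \<Delta>) (phi \<gamma> S \<Delta>') * d_s \<Delta> \<Delta>'"
    using main_bound by blast
  have B: "\<forall>\<Delta>. pos_diag \<Delta> \<longrightarrow> pos_diag (LambdaS \<gamma> S \<Delta>)" using LambdaS_pos by blast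
  have C: "stable (LambdaS \<gamma> S)" unfolding stable_def
  proof (intro allI impI)
    fix \<Delta> \<Delta>' :: "real^'n" assume E: "pos_diag \<Delta>" and E': "pos_diag \<Delta>'"
    have m: "max (phi \<gamma> S \<Delta>) (phi \<gamma> S \<Delta>') \<le> 1"
      using phi_lt1 E E' unfolding pos_diag_def by (auto simp: less_imp_le)
    have d0: "0 \<le> d_s \<Delta> \<Delta>'" by (rule ds_nonneg[OF E E'])
    have "d_s (LambdaS \<gamma> S \<Delta>) (LambdaS \<gamma> S \<Delta>') \<le> max (phi \<gamma> S \<Delta>) (phi \<gamma> S \<Delta>') * d_s \<Delta> \<Delta>'"
      by (rule main_bound[OF E E'])
    also have "\<dots> \<le> 1 * d_s \<Delta> \<Delta>'" using m d0 by (intro mult_right_mono) auto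
    finally show "d_s (LambdaS \<gamma> S \<Delta>) (LambdaS \<gamma> S \<Delta>') \<le> d_s \<Delta> \<Delta>'" by simp
  qed
  show ?thesis using A B C by blast
qed

end
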